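(* Let $X$ be a space such that $\mathsf{EC}(X,\mathbb{R})$ holds. If $X$ is either normal, or Tychonoff and $\aleph_1$-strongly collectionwise Hausdorff, then $X$ is $\omega_1$-compact.
   Context: All spaces are Hausdorff and maps continuous. For a non-Lindelöf space $X$ and a space $Y$, $\mathsf{EC}(X,Y)$ means: for every continuous $f:X\to Y$ there is a Lindelöf $Z\subset X$ such that $f(X\setminus Z)$ is a singleton (for Lindelöf $X$ the property is regarded as trivially true). A space is $\aleph_1$-strongly collectionwise Hausdorff if every closed discrete subset $\{x_\alpha:\alpha<\lambda\}$ with $\lambda\le\aleph_1$ can be expanded to a discrete collection of open sets $\{U_\alpha\}$ with $x_\alpha\in U_\alpha$. A space is $\omega_1$-compact if every closed discrete subspace is countable. *)

theory Defs
  imports "HOL-Analysis.Analysis"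
begin

definition EC :: "'a topology \<Rightarrow> 'b topology \<Rightarrow> bool" where
  "EC X Y \<longleftrightarrow>
     (\<not> Lindelof_space X \<longrightarrow>
       (\<forall>f. continuous_map X Y f \<longrightarrow>
          (\<exists>Z. Z \<subseteq> topspace X \<and> Lindelof_space (subtopology X Z) \<and>
               (\<exists>y. f ` (topspace X - Z) = {y}))))"

definition closed_discrete_in :: "'a topology \<Rightarrow> 'a set \<Rightarrow> bool" where
  "closed_discrete_in X D \<longleftrightarrow> closedin X D \<and> subtopology X D = discrete_topology D"

definition discrete_family :: "'a topology \<Rightarrow> 'i set \<Rightarrow> ('i \<Rightarrow> 'a set) \<Rightarrow> bool" where
  "discrete_family X I U \<longleftrightarrow>
     (\<forall>x\<in>topspace X. \<exists>V. openin X V \<and> x \<in> V \<and>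
        (\<forall>i\<in>I. \<forall>j\<in>I. U i \<inter> V \<noteq> {} \<longrightarrow> U j \<inter> V \<noteq> {} \<longrightarrow> i = j))"

definition aleph1_strongly_cwH :: "'a topology \<Rightarrow> bool" where
  "aleph1_strongly_cwH X \<longleftrightarrow>
     (\<forall>D. closed_discrete_in X D \<and> (card_of D, cardSuc natLeq) \<in> ordLeq \<longrightarrow>
        (\<exists>U. (\<forall>x\<in>D. openin X (U x) \<and> x \<in> U x) \<and> discrete_family X D U))"

definition omega1_compact :: "'a topology \<Rightarrow> bool" where
  "omega1_compact X \<longleftrightarrow> (\<forall>D. closed_discrete_in X D \<longrightarrow> countable D)"

end

theory Submission imports Defs begin
unbundle cardinal_syntax

lemma my_countable_card_le_natLeq: "countable A \<longleftrightarrow> |A| \<le>o natLeq"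
proof -
  have "countable A \<longleftrightarrow> |A| \<le>o |UNIV::nat set|"
    unfolding countable_def card_of_ordLeq[symmetric] by auto
  then show ?thesis using card_of_nat ordLeq_ordIso_trans ordIso_symmetric by blast
qed


lemma discrete_Lindelof_countable:
  assumes "Lindelof_space (discrete_topology S)" shows "countable S"
proof -
  have "\<exists>V. countable V \<and> V \<subseteq> (\<lambda>x. {x}) ` S \<and> \<Union>V = topspace (discrete_topology S)"
    by (rule Lindelof_spaceD[OF assms]) auto
  then obtain V where V: "countable V" "V \<subseteq> (\<lambda>x. {x}) ` S" "\<Union>V = S"
    by auto
  have "\<And>v. v \<in> V \<Longrightarrow> countable v" using V(2) by auto
  then have "countable (\<Union>v\<in>V. v)" using V(1) by (intro countable_UN)
  then have "countable (\<Union>V)" by simp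
  then show ?thesis using V(3) by simp
qed

lemma cd_countable:
  assumes "closed_discrete_in X D" "Lindelof_space (subtopology X Z)"
  shows "countable (Z \<inter> D)"
proof -
  have cl: "closedin X D" and st: "subtopology X D = discrete_topology D"
    using assms(1) unfolding closed_discrete_in_def by auto
  have "closedin (subtopology X Z) (D \<inter> Z)" using cl closedin_subtopology by blast
  then have "Lindelof_space (subtopology (subtopology X Z) (D \<inter> Z))"
    using assms(2) Lindelof_space_closedin_subtopology by blast
  moreover have "subtopology (subtopology X Z) (D \<inter> Z) = discrete_topology (Z \<inter> D)"
  proof -
    have "subtopology (subtopology X Z) (D \<inter> Z) = subtopology (subtopology X D) (Z \<inter> D)"
      by (simp add: subtopology_subtopology Int_ac)
    also have "\<dots> = discrete_topology (Z \<inter> D)"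
      by (simp add: st subtopology_discrete_topology Int_ac)
    finally show ?thesis .
  qed
  ultimately show ?thesis using discrete_Lindelof_countable by metis
qed

lemma cd_subset:
  assumes "closed_discrete_in X D" "B \<subseteq> D"
  shows "closed_discrete_in X B"
proof -
  have cl: "closedin X D" and st: "subtopology X D = discrete_topology D"
    using assms(1) unfolding closed_discrete_in_def by auto
  have "closedin (subtopology X D) B" using st assms(2) by simp
  then have "closedin X B" using cl closedin_trans_full by blast
  moreover have "subtopology X B = discrete_topology B"
  proof -
    have "subtopology X B = subtopology (subtopology X D) B"
      using assms(2) by (simp add: subtopology_subtopology Int_absorb1)
    also have "\<dots> = discrete_topology B" using assms(2) by (simp add: st subtopology_discrete_topology Int_absorb1)
    finally show ?thesis .
  qed
  ultimately show ?thesis unfolding closed_discrete_in_def by blast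
qed

lemma aleph1_subset:
  assumes "\<not> countable D"
  shows "\<exists>B\<subseteq>D. \<not> countable B \<and> (card_of B, cardSuc natLeq) \<in> ordLeq"
proof -
  have "\<not> |D| \<le>o natLeq" using assms my_countable_card_le_natLeq by blast
  then have "natLeq <o |D|" using not_ordLeq_iff_ordLess natLeq_Well_order card_of_Well_order by blast
  then have "cardSuc natLeq \<le>o |D|" using cardSuc_ordLess_ordLeq natLeq_Card_order card_of_Card_order by blast
  moreover have "|Field (cardSuc natLeq)| =o cardSuc natLeq"
    using card_of_Field_ordIso cardSuc_Card_order natLeq_Card_order by blast
  ultimately have "|Field (cardSuc natLeq)| \<le>o |D|" using ordIso_ordLeq_trans by blast
  then obtain B where B: "B \<subseteq> D" "|Field (cardSuc natLeq)| =o |B|"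
    using internalize_card_of_ordLeq2 by metis
  have iso: "|B| =o cardSuc natLeq"
    using B(2) \<open>|Field (cardSuc natLeq)| =o cardSuc natLeq\<close> ordIso_symmetric ordIso_transitive by blast
  then have le: "|B| \<le>o cardSuc natLeq" using ordIso_iff_ordLeq by blast
  have "\<not> countable B"
  proof
    assume "countable B"
    then have "|B| \<le>o natLeq" using my_countable_card_le_natLeq by blast
    then have "cardSuc natLeq \<le>o natLeq" using iso ordIso_symmetric ordIso_ordLeq_trans by blast
    moreover have "natLeq <o cardSuc natLeq" using cardSuc_greater natLeq_Card_order by blast
    ultimately show False using not_ordLess_ordLeq by blast
  qed
  then show ?thesis using B(1) le by blast
qed

lemma split_uncountable:
  assumes "\<not> countable B"
  shows "\<exists>A1 A2. A1 \<subseteq> B \<and> A2 \<subseteq> B \<and> A1 \<inter> A2 = {} \<and> \<not> countable A1 \<and> \<not> countable A2"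
proof -
  have inf: "infinite B" using assms countable_finite by blast
  then have "|B \<times> B| =o |B|" using card_of_Times_same_infinite by blast
  then obtain h where h: "bij_betw h (B \<times> B) B" using card_of_ordIso by blast
  obtain b0 where b0: "b0 \<in> B" using infinite_imp_nonempty[OF inf] by blast
  have "infinite (B - {b0})" using inf by simp
  then obtain b1 where "b1 \<in> B - {b0}" using infinite_imp_nonempty by blast
  then have b1: "b1 \<in> B" "b1 \<noteq> b0" by auto
  have inj: "inj_on h (B \<times> B)" using h bij_betw_def by blast
  have unc: "\<not> countable (h ` ({b} \<times> B))" if "b \<in> B" for b
  proof
    assume "countable (h ` ({b} \<times> B))"
    moreover have "{b} \<times> B \<subseteq> B \<times> B" using that by blast
    then have "inj_on h ({b} \<times> B)" using inj_on_subset[OF inj] by blast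
    ultimately have "countable ({b} \<times> B)" using countable_image_inj_on by blast
    then have "countable (snd ` ({b} \<times> B))" by blast
    moreover have "snd ` ({b} \<times> B) = B" by (simp add: snd_image_times)
    ultimately show False using assms by simp
  qed
  have sub: "h ` ({b} \<times> B) \<subseteq> B" if "b \<in> B" for b 
  proof -
    have "{b} \<times> B \<subseteq> B \<times> B" using that by blast
    then have "h ` ({b} \<times> B) \<subseteq> h ` (B \<times> B)" by (rule image_mono)
    then show ?thesis using bij_betw_imp_surj_on[OF h] by simp
  qed
  have "h ` ({b0} \<times> B) \<inter> h ` ({b1} \<times> B) = {}"
  proof (rule ccontr)
    assume "h ` ({b0} \<times> B) \<inter> h ` ({b1} \<times> B) \<noteq> {}"
    then obtain p q where pq: "p \<in> B" "q \<in> B" "h (b0, p) = h (b1, q)" by blast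
    have "(b0, p) \<in> B \<times> B" "(b1, q) \<in> B \<times> B" using pq b0 b1 by auto
    then have "(b0, p) = (b1, q)" using inj_onD[OF inj pq(3)] by blast
    then show False using b1 by simp
  qed
  note dj = this
  show ?thesis
    apply (rule exI[of _ "h ` ({b0} \<times> B)"], rule exI[of _ "h ` ({b1} \<times> B)"])
    using unc[OF b0] unc[OF b1(1)] sub[OF b0] sub[OF b1(1)] dj by (intro conjI)
qed

lemma continuous_map_local:
  assumes "\<forall>y\<in>topspace X. \<exists>V k. openin X V \<and> y \<in> V \<and> continuous_map X euclideanreal k \<and> (\<forall>z\<in>V. f z = k z)"
  shows "continuous_map X euclideanreal f"
  unfolding continuous_map_def
proof (intro conjI allI impI)
  show "f \<in> topspace X \<rightarrow> topspace euclideanreal" by simp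
  fix U assume U: "openin euclideanreal U"
  show "openin X {x \<in> topspace X. f x \<in> U}"
  proof (subst openin_subopen, intro ballI)
    fix y assume y: "y \<in> {x \<in> topspace X. f x \<in> U}"
    then obtain V k where Vk: "openin X V" "y \<in> V" "continuous_map X euclideanreal k" "\<forall>z\<in>V. f z = k z"
      using assms by blast
    let ?T = "V \<inter> {x \<in> topspace X. k x \<in> U}"
    have "openin X ?T" using Vk U openin_continuous_map_preimage by blast
    moreover have "y \<in> ?T" using y Vk by auto
    moreover have "?T \<subseteq> {x \<in> topspace X. f x \<in> U}" using Vk by auto
    ultimately show "\<exists>T. openin X T \<and> y \<in> T \<and> T \<subseteq> {x \<in> topspace X. f x \<in> U}" by blast
  qed
qed

lemma separating_function:
  assumes "normal_space X \<or> (completely_regular_space X \<and> aleph1_strongly_cwH X)"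
    and B: "closed_discrete_in X B" "(card_of B, cardSuc natLeq) \<in> ordLeq"
    and A: "A1 \<subseteq> B" "A2 \<subseteq> B" "A1 \<inter> A2 = {}"
  shows "\<exists>f. continuous_map X euclideanreal f \<and> (\<forall>x\<in>A1. f x = 0) \<and> (\<forall>x\<in>A2. f x = 1)"
  using assms(1)
proof
  assume N: "normal_space X"
  have c1: "closedin X A1" using cd_subset[OF B(1) A(1)] unfolding closed_discrete_in_def by blast
  have c2: "closedin X A2" using cd_subset[OF B(1) A(2)] unfolding closed_discrete_in_def by blast
  have dj: "disjnt A1 A2" using A(3) by (simp add: disjnt_def)
  obtain f where f: "continuous_map X (top_of_set {0..1}) f" "f ` A1 \<subseteq> {0}" "f ` A2 \<subseteq> {1::real}"
    using Urysohn_lemma[OF N c1 c2 dj, of 0 1] by auto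
  have "continuous_map X euclideanreal f" using f(1) continuous_map_in_subtopology by blast
  then show ?thesis using f by blast
next
  assume C: "completely_regular_space X \<and> aleph1_strongly_cwH X"
  then obtain U where U: "\<forall>x\<in>B. openin X (U x) \<and> x \<in> U x" "discrete_family X B U"
    using B unfolding aleph1_strongly_cwH_def by blast
  have Btop: "B \<subseteq> topspace X" using B(1) unfolding closed_discrete_in_def using closedin_subset by blast
  have DF: "\<forall>y\<in>topspace X. \<exists>V. openin X V \<and> y \<in> V \<and> (\<forall>i\<in>B. \<forall>j\<in>B. U i \<inter> V \<noteq> {} \<longrightarrow> U j \<inter> V \<noteq> {} \<longrightarrow> i = j)"
    using U(2) unfolding discrete_family_def .
  have disj: "x = y" if "x \<in> B" "y \<in> B" "z \<in> U x" "z \<in> U y" for x y z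
  proof -
    have "openin X (U x)" using U(1) that(1) by blast
    then have "z \<in> topspace X" using openin_subset that(3) by blast
    from bspec[OF DF this] obtain V where VV: "openin X V \<and> z \<in> V \<and> (\<forall>i\<in>B. \<forall>j\<in>B. U i \<inter> V \<noteq> {} \<longrightarrow> U j \<inter> V \<noteq> {} \<longrightarrow> i = j)"
      by (rule exE)
    note V = VV[THEN conjunct1] VV[THEN conjunct2, THEN conjunct1] VV[THEN conjunct2, THEN conjunct2]
    have "U x \<inter> V \<noteq> {}" "U y \<inter> V \<noteq> {}" using V(2) that(3,4) by blast+
    then show ?thesis using V(3) that(1,2) by blast
  qed
  have "\<exists>h. continuous_map X euclideanreal h \<and> h x = 1 \<and> (\<forall>z\<in>topspace X - U x. h z = 0)" if "x \<in> B" for x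
  proof -
    have "closedin X (topspace X - U x)" using U(1) that by blast
    moreover have "x \<in> topspace X - (topspace X - U x)" using U(1) that Btop by blast
    ultimately obtain g where g: "continuous_map X (top_of_set {0..1}) g" "g x = 0" "g ` (topspace X - U x) \<subseteq> {1::real}"
      using C unfolding completely_regular_space_def by blast
    have gc: "continuous_map X euclideanreal g" using g(1) continuous_map_in_subtopology by blast
    have "continuous_map X euclideanreal (\<lambda>z. 1 - g z)"
      using continuous_map_diff[OF continuous_map_const[THEN iffD2] gc] by auto
    then show ?thesis using g by (intro exI[of _ "\<lambda>z. 1 - g z"]) auto
  qed
  then obtain h where h: "\<And>x. x \<in> B \<Longrightarrow> continuous_map X euclideanreal (h x) \<and> h x x = 1 \<and> (\<forall>z\<in>topspace X - U x. h x z = 0)"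
    by metis
  define f where "f z = (if \<exists>x\<in>A2. z \<in> U x then h (SOME x. x \<in> A2 \<and> z \<in> U x) z else 0)" for z
  have fval: "f z = h x z" if "x \<in> A2" "z \<in> U x" for x z
  proof -
    have "(SOME x. x \<in> A2 \<and> z \<in> U x) \<in> A2 \<and> z \<in> U (SOME x. x \<in> A2 \<and> z \<in> U x)"
      using that by (intro someI) blast
    then have "(SOME x. x \<in> A2 \<and> z \<in> U x) = x" using disj that A by blast
    then show ?thesis unfolding f_def using that by auto
  qed
  have fzero: "f z = 0" if "\<forall>x\<in>A2. z \<notin> U x" for z
    unfolding f_def using that by auto
  have "continuous_map X euclideanreal f"
  proof (rule continuous_map_local, intro ballI)
    fix y assume y: "y \<in> topspace X"
    from bspec[OF DF this] obtain V where VV: "openin X V \<and> y \<in> V \<and> (\<forall>i\<in>B. \<forall>j\<in>B. U i \<inter> V \<noteq> {} \<longrightarrow> U j \<inter> V \<noteq> {} \<longrightarrow> i = j)"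
      by (rule exE)
    note V = VV[THEN conjunct1] VV[THEN conjunct2, THEN conjunct1] VV[THEN conjunct2, THEN conjunct2]
    show "\<exists>V k. openin X V \<and> y \<in> V \<and> continuous_map X euclideanreal k \<and> (\<forall>z\<in>V. f z = k z)"
    proof (cases "\<exists>i\<in>A2. U i \<inter> V \<noteq> {}")
      case True
      then obtain i where i: "i \<in> A2" "U i \<inter> V \<noteq> {}" by blast
      have iB: "i \<in> B" using i(1) A(2) by blast
      have hi: "continuous_map X euclideanreal (h i)" "\<forall>z\<in>topspace X - U i. h i z = 0" using h[OF iB] by auto
      have "f z = h i z" if "z \<in> V" for z
      proof (cases "z \<in> U i")
        case True then show ?thesis using fval i by blast
      next
        case False
        have "\<forall>x\<in>A2. z \<notin> U x"
        proof (intro ballI notI)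
          fix x assume "x \<in> A2" "z \<in> U x"
          then have "x \<in> B" "U x \<inter> V \<noteq> {}" using A(2) that by blast+
          then have "x = i" using V(3) iB i(2) by blast
          then show False using False \<open>z \<in> U x\<close> by simp
        qed
        then have "f z = 0" using fzero by blast
        moreover have "z \<in> topspace X" using that V(1) openin_subset by blast
        moreover have "h i z = 0" using hi(2) \<open>z \<in> topspace X\<close> False by blast
        ultimately show ?thesis by simp
      qed
      then show ?thesis using V(1,2) hi(1) by blast
    next
      case False
      have "f z = 0" if "z \<in> V" for z using False fzero that by blast
      then show ?thesis using V by (intro exI[of _ V] exI[of _ "\<lambda>_. 0"]) auto
    qed
  qed
  moreover have "\<forall>x\<in>A1. f x = 0"
  proof
    fix x assume x: "x \<in> A1"
    have "\<forall>y\<in>A2. x \<notin> U y"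
    proof (intro ballI notI)
      fix y assume "y \<in> A2" "x \<in> U y"
      moreover have "x \<in> B" using x A(1) by blast
      moreover have "x \<in> U x" using U(1) \<open>x \<in> B\<close> by blast
      moreover have "y \<in> B" using \<open>y \<in> A2\<close> A(2) by blast
      ultimately have "x = y" using disj[of x y x] by blast
      then show False using x \<open>y \<in> A2\<close> A(3) by blast
    qed
    then show "f x = 0" using fzero by blast
  qed
  moreover have "\<forall>x\<in>A2. f x = 1"
  proof
    fix x assume x: "x \<in> A2"
    then have xB: "x \<in> B" using A(2) by blast
    then have "x \<in> U x" using U(1) by blast
    then have "f x = h x x" using fval x by blast
    also have "\<dots> = 1" using h[OF xB] by blast
    finally show "f x = 1" .
  qed
  ultimately show ?thesis by blast
qed

theorem theorem3p4:
  fixes X :: "'a topology"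
  assumes "Hausdorff_space X"
    and "EC X euclideanreal"
    and "normal_space X \<or> (completely_regular_space X \<and> aleph1_strongly_cwH X)"
  shows "omega1_compact X"
  unfolding omega1_compact_def
proof (rule allI, rule impI, rule ccontr)
  fix D assume D: "closed_discrete_in X D" and unc: "\<not> countable D"
  obtain B where B: "B \<subseteq> D" "\<not> countable B" "(card_of B, cardSuc natLeq) \<in> ordLeq"
    using aleph1_subset[OF unc] by blast
  have Bcd: "closed_discrete_in X B" using cd_subset D B(1) by blast
  obtain A1 A2 where A: "A1 \<subseteq> B" "A2 \<subseteq> B" "A1 \<inter> A2 = {}" "\<not> countable A1" "\<not> countable A2"
    using split_uncountable[OF B(2)] by blast
  obtain f where f: "continuous_map X euclideanreal f" "\<forall>x\<in>A1. f x = 0" "\<forall>x\<in>A2. f x = 1"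
    using separating_function[OF assms(3) Bcd B(3) A(1-3)] by blast
  have "\<not> Lindelof_space X"
  proof
    assume "Lindelof_space X"
    then have "countable (topspace X \<inter> D)" using cd_countable[OF D, of "topspace X"] by simp
    moreover have "topspace X \<inter> D = D" using D unfolding closed_discrete_in_def using closedin_subset by blast
    ultimately show False using unc by simp
  qed
  then obtain Z y where Z: "Z \<subseteq> topspace X" "Lindelof_space (subtopology X Z)" "f ` (topspace X - Z) = {y}"
    using assms(2) f(1) unfolding EC_def by blast
  have cZ: "countable (Z \<inter> D)" using cd_countable[OF D Z(2)] .
  have Dtop: "D \<subseteq> topspace X" using D unfolding closed_discrete_in_def using closedin_subset by blast
  obtain a where a: "a \<in> A1" "a \<notin> Z"
  proof -
    have "\<not> A1 \<subseteq> Z \<inter> D"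
    proof
      assume "A1 \<subseteq> Z \<inter> D" then have "countable A1" using cZ countable_subset by blast
      then show False using A(4) by simp
    qed
    moreover have "A1 \<subseteq> D" using A(1) B(1) by blast
    ultimately obtain c where "c \<in> A1" "c \<notin> Z" by blast
    then show ?thesis by (rule that)
  qed
  obtain b where b: "b \<in> A2" "b \<notin> Z"
  proof -
    have "\<not> A2 \<subseteq> Z \<inter> D"
    proof
      assume "A2 \<subseteq> Z \<inter> D" then have "countable A2" using cZ countable_subset by blast
      then show False using A(5) by simp
    qed
    moreover have "A2 \<subseteq> D" using A(2) B(1) by blast
    ultimately obtain c where "c \<in> A2" "c \<notin> Z" by blast
    then show ?thesis by (rule that)
  qed
  have "a \<in> topspace X" using a(1) A(1) B(1) Dtop by blast
  then have "f a \<in> {y}" using Z(3) a(2) by blast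
  have "b \<in> topspace X" using b(1) A(2) B(1) Dtop by blast
  then have "f b \<in> {y}" using Z(3) b(2) by blast
  then show False using f a b \<open>f a \<in> {y}\<close> by simp
qed

end
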